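(* Let $G$ be a finite abstract simplicial complex with connection matrix $L$ and $g=L^{-1}$. Then for every $x\in G$, $g(x,x)=\chi(W^+(x))=1-\chi(S(x))$.
   Context: A finite abstract simplicial complex $G$ is a finite set of non-empty finite sets closed under taking non-empty subsets; $\omega(y)=(-1)^{|y|-1}$. The connection matrix $L$ has $L(x,y)=1$ if $x\cap y\neq\emptyset$ and $0$ otherwise. The star is $W^+(x)=\{y\in G: x\subseteq y\}$ and $\chi(W^+(x))=\sum_{y\in W^+(x)}\omega(y)$. The graph $G_1$ has vertex set $G$ with $x\neq y$ adjacent iff one contains the other; $S(x)=\{y\in G: y\subsetneq x \text{ or } x\subsetneq y\}$ and $\chi(S(x))$ is the Euler characteristic of the clique complex of the subgraph of $G_1$ induced on $S(x)$. *)

theory Defs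
  imports Complex_Main
begin

definition simplicial_complex :: "'a set set \<Rightarrow> bool" where
  "simplicial_complex G \<longleftrightarrow> finite G \<and> (\<forall>x\<in>G. finite x \<and> x \<noteq> {}) \<and>
     (\<forall>x\<in>G. \<forall>y. y \<subseteq> x \<and> y \<noteq> {} \<longrightarrow> y \<in> G)"

definition omega :: "'b set \<Rightarrow> int" where
  "omega y = (-1) ^ (card y - 1)"

definition chi :: "'b set set \<Rightarrow> int" where
  "chi A = (\<Sum>y\<in>A. omega y)"

definition conn_matrix :: "'a set \<Rightarrow> 'a set \<Rightarrow> real" where
  "conn_matrix x y = (if x \<inter> y \<noteq> {} then 1 else 0)"

definition inverse_on :: "'i set \<Rightarrow> ('i \<Rightarrow> 'i \<Rightarrow> real) \<Rightarrow> ('i \<Rightarrow> 'i \<Rightarrow> real) \<Rightarrow> bool" where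
  "inverse_on G L g \<longleftrightarrow>
     (\<forall>x\<in>G. \<forall>z\<in>G. (\<Sum>y\<in>G. L x y * g y z) = (if x = z then 1 else 0)) \<and>
     (\<forall>x\<in>G. \<forall>z\<in>G. (\<Sum>y\<in>G. g x y * L y z) = (if x = z then 1 else 0))"

definition star :: "'a set set \<Rightarrow> 'a set \<Rightarrow> 'a set set" where
  "star G x = {y\<in>G. x \<subseteq> y}"

definition G1_adj :: "'a set \<Rightarrow> 'a set \<Rightarrow> bool" where
  "G1_adj x y \<longleftrightarrow> x \<noteq> y \<and> (x \<subseteq> y \<or> y \<subseteq> x)"

definition sphere :: "'a set set \<Rightarrow> 'a set \<Rightarrow> 'a set set" where
  "sphere G x = {y\<in>G. y \<subset> x \<or> x \<subset> y}"

definition clique_complex :: "'v set \<Rightarrow> ('v \<Rightarrow> 'v \<Rightarrow> bool) \<Rightarrow> 'v set set" where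
  "clique_complex V adj = {C. C \<subseteq> V \<and> C \<noteq> {} \<and> finite C \<and> (\<forall>a\<in>C. \<forall>b\<in>C. a \<noteq> b \<longrightarrow> adj a b)}"

end

theory Submission
  imports Defs
begin

lemma pow_alt:
  assumes "finite D"
  shows "(\<Sum>u\<in>Pow D. (-1::int)^card u) = (if D = {} then 1 else 0)"
  using assms
proof (induction D rule: finite_induct)
  case empty
  then show ?case by simp
next
  case (insert a F)
  have inj: "inj_on (insert a) (Pow F)"
    using insert.hyps(2) by (auto simp: inj_on_def) 
  have disj: "Pow F \<inter> insert a ` Pow F = {}" using insert.hyps(2) by auto
  have "(\<Sum>u\<in>Pow (insert a F). (-1::int)^card u)
      = (\<Sum>u\<in>Pow F. (-1::int)^card u) + (\<Sum>u\<in>insert a ` Pow F. (-1::int)^card u)"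
    unfolding Pow_insert using insert.hyps(1) disj by (simp add: sum.union_disjoint)
  also have "(\<Sum>u\<in>insert a ` Pow F. (-1::int)^card u) = (\<Sum>u\<in>Pow F. (-1::int)^card (insert a u))"
    using inj by (simp add: sum.reindex)
  also have "\<dots> = (\<Sum>u\<in>Pow F. - ((-1::int)^card u))"
  proof (rule sum.cong)
    fix u assume "u \<in> Pow F"
    then have "finite u" "a \<notin> u" using insert.hyps finite_subset[of u F] by auto
    then show "(-1::int)^card (insert a u) = - ((-1::int)^card u)" by simp
  qed simp
  finally show ?case by (simp add: sum_negf)
qed

lemma omega_s: "finite y \<Longrightarrow> y \<noteq> {} \<Longrightarrow> omega y = - ((-1::int)^card y)"
proof -
  assume "finite y" "y \<noteq> {}"
  then have "card y = Suc (card y - 1)" by (simp add: card_gt_0_iff)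
  then have "(-1::int)^card y = (-1)^Suc (card y - 1)" by (rule arg_cong)
  then show ?thesis unfolding omega_def by simp
qed

lemma interval_s:
  assumes "finite y" "x \<subseteq> y"
  shows "(\<Sum>m\<in>{m. x \<subseteq> m \<and> m \<subseteq> y}. (-1::int)^card m) = (if x = y then (-1)^card x else 0)"
proof -
  have fx: "finite x" using assms finite_subset[of x y] by auto
  have eq: "{m. x \<subseteq> m \<and> m \<subseteq> y} = (\<lambda>u. x \<union> u) ` Pow (y - x)"
  proof
    show "{m. x \<subseteq> m \<and> m \<subseteq> y} \<subseteq> (\<lambda>u. x \<union> u) ` Pow (y - x)"
    proof
      fix m assume "m \<in> {m. x \<subseteq> m \<and> m \<subseteq> y}"
      then have "m = x \<union> (m - x)" "m - x \<in> Pow (y - x)" by auto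
      then show "m \<in> (\<lambda>u. x \<union> u) ` Pow (y - x)" by (rule image_eqI)
    qed
  qed (use assms in auto)
  have inj: "inj_on (\<lambda>u. x \<union> u) (Pow (y - x))"
  proof (rule inj_onI)
    fix u v assume "u \<in> Pow (y - x)" "v \<in> Pow (y - x)" "x \<union> u = x \<union> v"
    then have "u = (x \<union> u) - x" "v = (x \<union> v) - x" by auto
    then show "u = v" using \<open>x \<union> u = x \<union> v\<close> by simp
  qed
  have "(\<Sum>m\<in>{m. x \<subseteq> m \<and> m \<subseteq> y}. (-1::int)^card m) = (\<Sum>u\<in>Pow (y-x). (-1::int)^card (x \<union> u))"
    unfolding eq using inj by (simp add: sum.reindex)
  also have "\<dots> = (\<Sum>u\<in>Pow (y-x). (-1::int)^card x * (-1)^card u)"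
  proof (rule sum.cong)
    fix u assume "u \<in> Pow (y - x)"
    then have "finite u" "x \<inter> u = {}" using assms finite_subset[of u y] by auto
    then show "(-1::int)^card (x \<union> u) = (-1)^card x * (-1)^card u"
      using fx by (simp add: card_Un_disjoint power_add)
  qed simp
  also have "\<dots> = (-1)^card x * (if y - x = {} then 1 else 0)"
    using assms by (simp add: sum_distrib_left[symmetric] pow_alt)
  finally show ?thesis using assms by auto
qed

lemma interval_omega:
  assumes "finite y" "x \<subseteq> y" "x \<noteq> {}"
  shows "(\<Sum>m\<in>{m. x \<subseteq> m \<and> m \<subseteq> y}. omega m) = (if x = y then omega x else 0)"
proof -
  have "(\<Sum>m\<in>{m. x \<subseteq> m \<and> m \<subseteq> y}. omega m) = (\<Sum>m\<in>{m. x \<subseteq> m \<and> m \<subseteq> y}. - ((-1::int)^card m))"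
    using assms by (intro sum.cong refl omega_s) (auto intro: rev_finite_subset[OF assms(1)])
  also have "\<dots> = - (if x = y then (-1)^card x else 0)"
    using interval_s[OF assms(1,2)] by (simp add: sum_negf)
  finally show ?thesis using assms omega_s[of x] finite_subset[of x y] by auto
qed

lemma nonempty_omega:
  assumes "finite D"
  shows "(\<Sum>y\<in>Pow D - {{}}. omega y) = (if D = {} then 0 else 1)"
proof -
  have f: "finite (Pow D)" using assms by simp
  have "(\<Sum>y\<in>Pow D - {{}}. omega y) = (\<Sum>y\<in>Pow D - {{}}. - ((-1::int)^card y))"
    using assms by (intro sum.cong refl omega_s) (auto intro: rev_finite_subset[OF assms(1)])
  also have "\<dots> = - ((\<Sum>y\<in>Pow D. (-1::int)^card y) - 1)"
    using f by (simp add: sum_negf sum_diff1)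
  finally show ?thesis using pow_alt[OF assms] by simp
qed

definition chainS :: "'a set set \<Rightarrow> bool" where
  "chainS C \<longleftrightarrow> (\<forall>a\<in>C. \<forall>b\<in>C. a \<noteq> b \<longrightarrow> a \<subset> b \<or> b \<subset> a)"

definition hsum :: "'a set set \<Rightarrow> int" where
  "hsum P = (\<Sum>C\<in>{C. C \<subseteq> P \<and> chainS C}. (-1)^card C)"

lemma hsum_rec:
  fixes P :: "'a set set" and r :: "'a set \<Rightarrow> 'a set \<Rightarrow> bool"
  assumes fin: "finite P"
    and tr: "\<And>a b c. r a b \<Longrightarrow> r b c \<Longrightarrow> r a c"
    and irr: "\<And>a. \<not> r a a"
    and comp: "\<And>a b. (a \<subset> b \<or> b \<subset> a) \<longleftrightarrow> (r a b \<or> r b a)"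
    and minex: "\<And>C. C \<subseteq> P \<Longrightarrow> C \<noteq> {} \<Longrightarrow> \<exists>m\<in>C. \<forall>y\<in>C. \<not> r y m"
  shows "hsum P = 1 - (\<Sum>m\<in>P. hsum {y\<in>P. r m y})"
proof -
  define Ch where "Ch Q = {C. C \<subseteq> Q \<and> chainS C}" for Q :: "'a set set"
  define A where "A m = insert m ` Ch {y\<in>P. r m y}" for m
  have finCh: "finite (Ch Q)" if "finite Q" for Q
    using that unfolding Ch_def by (rule finite_subset[rotated, OF finite_Pow_iff[THEN iffD2]]) auto
  have finQ: "finite {y\<in>P. r m y}" for m using fin by simp
  have eq: "Ch P = insert {} (\<Union>m\<in>P. A m)"
  proof (rule set_eqI, rule iffI)
    fix C assume C: "C \<in> Ch P"
    show "C \<in> insert {} (\<Union>m\<in>P. A m)"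
    proof (cases "C = {}")
      case False
      from C have CP: "C \<subseteq> P" and ch: "chainS C" unfolding Ch_def by auto
      obtain m where m: "m \<in> C" "\<forall>y\<in>C. \<not> r y m" using minex[OF CP False] by blast
      have "C - {m} \<in> Ch {y\<in>P. r m y}"
        unfolding Ch_def using CP ch m comp unfolding chainS_def by auto
      moreover have "C = insert m (C - {m})" using m by auto
      ultimately show ?thesis unfolding A_def using m CP by blast
    qed simp
  next
    fix C assume "C \<in> insert {} (\<Union>m\<in>P. A m)"
    then show "C \<in> Ch P"
    proof
      assume "C = {}" then show ?thesis unfolding Ch_def chainS_def by auto
    next
      assume "C \<in> (\<Union>m\<in>P. A m)"
      then obtain m D where mD: "m \<in> P" "D \<in> Ch {y\<in>P. r m y}" "C = insert m D"
        unfolding A_def by auto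
      then show ?thesis unfolding Ch_def chainS_def using comp by auto
    qed
  qed
  have notin: "{} \<notin> (\<Union>m\<in>P. A m)" unfolding A_def by auto
  have disj: "\<forall>i\<in>P. \<forall>j\<in>P. i \<noteq> j \<longrightarrow> A i \<inter> A j = {}"
  proof (intro ballI impI)
    fix i j assume ij: "i \<in> P" "j \<in> P" "i \<noteq> j"
    show "A i \<inter> A j = {}"
    proof (rule ccontr)
      assume "A i \<inter> A j \<noteq> {}"
      then obtain D E where "D \<in> Ch {y\<in>P. r i y}" "E \<in> Ch {y\<in>P. r j y}" "insert i D = insert j E"
        unfolding A_def by auto
      then have "i \<in> E" "j \<in> D" "E \<subseteq> {y\<in>P. r j y}" "D \<subseteq> {y\<in>P. r i y}"
        using ij unfolding Ch_def by blast+
      then have "r j i" "r i j" by auto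
      then show False using tr irr by blast
    qed
  qed
  have inj: "inj_on (insert m) (Ch {y\<in>P. r m y})" for m
    unfolding inj_on_def Ch_def using irr by auto (metis insert_absorb insert_ident mem_Collect_eq subsetD)+
  have sA: "(\<Sum>C\<in>A m. (-1::int)^card C) = - hsum {y\<in>P. r m y}" for m
  proof -
    have "(\<Sum>C\<in>A m. (-1::int)^card C) = (\<Sum>D\<in>Ch {y\<in>P. r m y}. (-1::int)^card (insert m D))"
      unfolding A_def using inj by (simp add: sum.reindex)
    also have "\<dots> = (\<Sum>D\<in>Ch {y\<in>P. r m y}. - ((-1::int)^card D))"
    proof (rule sum.cong)
      fix D assume "D \<in> Ch {y\<in>P. r m y}"
      then have "finite D" "m \<notin> D" unfolding Ch_def using irr by (auto intro: rev_finite_subset[OF fin])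
      then show "(-1::int)^card (insert m D) = - ((-1::int)^card D)" by simp
    qed simp
    finally show ?thesis unfolding hsum_def Ch_def by (simp add: sum_negf)
  qed
  have "hsum P = (\<Sum>C\<in>Ch P. (-1::int)^card C)" unfolding hsum_def Ch_def by simp
  also have "\<dots> = 1 + (\<Sum>C\<in>(\<Union>m\<in>P. A m). (-1::int)^card C)"
    unfolding eq using notin fin finCh finQ unfolding A_def by (subst sum.insert) auto
  also have "(\<Sum>C\<in>(\<Union>m\<in>P. A m). (-1::int)^card C) = (\<Sum>m\<in>P. \<Sum>C\<in>A m. (-1::int)^card C)"
    using fin finCh finQ disj unfolding A_def by (intro sum.UNION_disjoint) auto
  finally show ?thesis using sA by (simp add: sum_negf)
qed

lemma omega_sq: "omega x * omega x = 1"
  unfolding omega_def by (simp flip: power_add)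

lemma hsum_rec_up:
  assumes "finite P"
  shows "hsum P = 1 - (\<Sum>m\<in>P. hsum {y\<in>P. m \<subset> y})"
proof (rule hsum_rec[OF assms])
  fix C assume "C \<subseteq> P" "C \<noteq> {}"
  then have "finite C" using assms by (meson finite_subset)
  from finite_has_minimal[OF this \<open>C \<noteq> {}\<close>] show "\<exists>m\<in>C. \<forall>y\<in>C. \<not> y \<subset> m" by auto
qed auto

lemma hsum_rec_down:
  assumes "finite P"
  shows "hsum P = 1 - (\<Sum>m\<in>P. hsum {y\<in>P. y \<subset> m})"
proof (rule hsum_rec[OF assms, where r = "\<lambda>a b. b \<subset> a"])
  fix C assume "C \<subseteq> P" "C \<noteq> {}"
  then have "finite C" using assms by (meson finite_subset)
  from finite_has_maximal[OF this \<open>C \<noteq> {}\<close>] show "\<exists>m\<in>C. \<forall>y\<in>C. \<not> m \<subset> y" by auto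
qed auto

lemma sc_props:
  assumes "simplicial_complex G"
  shows "finite G" "\<And>x. x \<in> G \<Longrightarrow> finite x" "\<And>x. x \<in> G \<Longrightarrow> x \<noteq> {}"
    "\<And>x y. x \<in> G \<Longrightarrow> y \<subseteq> x \<Longrightarrow> y \<noteq> {} \<Longrightarrow> y \<in> G"
  using assms unfolding simplicial_complex_def by blast+

lemma inner_up:
  assumes sc: "simplicial_complex G" and x: "x \<in> G" and y: "y \<in> G"
  shows "(\<Sum>m\<in>{m\<in>{y\<in>G. x \<subset> y}. m \<subseteq> y}. omega m) = (if x \<subset> y then - omega x else 0)"
proof (cases "x \<subset> y")
  case True
  have eq: "{m\<in>{y\<in>G. x \<subset> y}. m \<subseteq> y} = {m. x \<subseteq> m \<and> m \<subseteq> y} - {x}"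
  proof (rule set_eqI)
    fix m
    have "x \<subseteq> m \<Longrightarrow> m \<subseteq> y \<Longrightarrow> m \<in> G" using sc_props(4)[OF sc y, of m] sc_props(3)[OF sc x] by blast
    then show "m \<in> {m\<in>{y\<in>G. x \<subset> y}. m \<subseteq> y} \<longleftrightarrow> m \<in> {m. x \<subseteq> m \<and> m \<subseteq> y} - {x}"
      by (simp add: psubset_eq) blast
  qed
  have fy: "finite y" using sc_props(2)[OF sc y] .
  have fi: "finite {m. x \<subseteq> m \<and> m \<subseteq> y}" by (rule finite_subset[of _ "Pow y"]) (use fy in auto)
  have "(\<Sum>m\<in>{m\<in>{y\<in>G. x \<subset> y}. m \<subseteq> y}. omega m) = (\<Sum>m\<in>{m. x \<subseteq> m \<and> m \<subseteq> y}. omega m) - omega x"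
    unfolding eq using fi True by (simp add: sum_diff1 psubset_imp_subset)
  also have "\<dots> = - omega x" using interval_omega[OF fy, of x] True sc_props(3)[OF sc x] by auto
  finally show ?thesis using True by simp
next
  case False
  then have e0: "{m\<in>{y\<in>G. x \<subset> y}. m \<subseteq> y} = {}" by auto
  show ?thesis unfolding e0 using False by simp
qed

lemma hsum_up:
  assumes sc: "simplicial_complex G"
  shows "x \<in> G \<Longrightarrow> hsum {y\<in>G. x \<subset> y} = omega x * chi (star G x)"
proof (induction "card {y\<in>G. x \<subset> y}" arbitrary: x rule: less_induct)
  case less
  note x = less.prems
  define U where "U = {y\<in>G. x \<subset> y}"
  have fG: "finite G" using sc_props(1)[OF sc] .
  have fU: "finite U" unfolding U_def using fG by simp
  have "hsum U = 1 - (\<Sum>m\<in>U. hsum {y\<in>U. m \<subset> y})" by (rule hsum_rec_up[OF fU])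
  also have "(\<Sum>m\<in>U. hsum {y\<in>U. m \<subset> y}) = (\<Sum>m\<in>U. omega m * chi (star G m))"
  proof (rule sum.cong)
    fix m assume m: "m \<in> U"
    have e: "{y\<in>U. m \<subset> y} = {y\<in>G. m \<subset> y}" using m unfolding U_def by auto
    have "{y\<in>G. m \<subset> y} \<subset> U" using m unfolding U_def by auto
    then have "card {y\<in>G. m \<subset> y} < card {y\<in>G. x \<subset> y}" using fU unfolding U_def by (rule psubset_card_mono[rotated])
    then show "hsum {y\<in>U. m \<subset> y} = omega m * chi (star G m)" unfolding e
      using less.hyps[of m] m unfolding U_def by auto
  qed simp
  also have "\<dots> = (\<Sum>m\<in>U. \<Sum>y\<in>{y\<in>G. m \<subseteq> y}. omega m * omega y)"
    unfolding chi_def star_def by (simp add: sum_distrib_left)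
  also have "\<dots> = (\<Sum>y\<in>G. \<Sum>m\<in>{m\<in>U. m \<subseteq> y}. omega m * omega y)"
    using fU fG by (rule sum.swap_restrict)
  also have "\<dots> = (\<Sum>y\<in>G. (if x \<subset> y then - omega x else 0) * omega y)"
  proof (rule sum.cong)
    fix y assume y: "y \<in> G"
    show "(\<Sum>m\<in>{m\<in>U. m \<subseteq> y}. omega m * omega y) = (if x \<subset> y then - omega x else 0) * omega y"
      using inner_up[OF sc x y] unfolding U_def by (simp add: sum_distrib_right[symmetric])
  qed simp
  also have "\<dots> = (\<Sum>y\<in>G. if x \<subset> y then - (omega x * omega y) else 0)"
    by (rule sum.cong) auto
  also have "\<dots> = (\<Sum>y\<in>U. - (omega x * omega y))"
    unfolding U_def using fG by (simp add: sum.inter_filter)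
  finally have h: "hsum U = 1 + omega x * (\<Sum>y\<in>U. omega y)" by (simp add: sum_distrib_left sum_negf)
  have st: "star G x = insert x U" unfolding star_def U_def using x by auto
  have "chi (star G x) = omega x + (\<Sum>y\<in>U. omega y)" unfolding chi_def st using fU by (simp add: U_def)
  then have "omega x * chi (star G x) = omega x * omega x + omega x * (\<Sum>y\<in>U. omega y)"
    by (simp add: distrib_left)
  then show ?case using h omega_sq[of x] unfolding U_def by simp
qed

lemma hsum_down:
  shows "finite x \<Longrightarrow> x \<noteq> {} \<Longrightarrow> hsum {y. y \<noteq> {} \<and> y \<subset> x} = omega x"
proof (induction "card x" arbitrary: x rule: less_induct)
  case less
  define D where "D = {y. y \<noteq> {} \<and> y \<subset> x}"
  have D2: "D = Pow x - {{}} - {x}" unfolding D_def by auto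
  have fD: "finite D" unfolding D2 using less.prems by simp
  have "hsum D = 1 - (\<Sum>m\<in>D. hsum {y\<in>D. y \<subset> m})" by (rule hsum_rec_down[OF fD])
  also have "(\<Sum>m\<in>D. hsum {y\<in>D. y \<subset> m}) = (\<Sum>m\<in>D. omega m)"
  proof (rule sum.cong)
    fix m assume m: "m \<in> D"
    have e: "{y\<in>D. y \<subset> m} = {y. y \<noteq> {} \<and> y \<subset> m}" using m unfolding D_def by auto
    have "finite m" "m \<noteq> {}" "m \<subset> x" using m less.prems unfolding D_def by (auto intro: rev_finite_subset[OF less.prems(1)])
    moreover have "card m < card x" using psubset_card_mono less.prems(1) \<open>m \<subset> x\<close> by blast
    ultimately show "hsum {y\<in>D. y \<subset> m} = omega m" unfolding e
      using less.hyps[of m] by simp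
  qed simp
  also have "(\<Sum>m\<in>D. omega m) = (\<Sum>m\<in>Pow x - {{}}. omega m) - omega x"
    unfolding D2 using less.prems by (subst sum_diff1) auto
  also have "\<dots> = 1 - omega x" using nonempty_omega[of x] less.prems by simp
  finally show ?case unfolding D_def by simp
qed

lemma hsum_union:
  assumes fA: "finite A" and fB: "finite B" and lt: "\<And>a b. a \<in> A \<Longrightarrow> b \<in> B \<Longrightarrow> a \<subset> b"
  shows "hsum (A \<union> B) = hsum A * hsum B"
proof -
  define Ch where "Ch Q = {C. C \<subseteq> Q \<and> chainS C}" for Q :: "'a set set"
  have disj: "A \<inter> B = {}" using lt by blast
  have finCh: "finite (Ch Q)" if "finite Q" for Q
    unfolding Ch_def by (rule finite_subset[of _ "Pow Q"]) (use that in auto)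
  have eq: "Ch (A \<union> B) = (\<lambda>(C1, C2). C1 \<union> C2) ` (Ch A \<times> Ch B)"
  proof
    show "Ch (A \<union> B) \<subseteq> (\<lambda>(C1, C2). C1 \<union> C2) ` (Ch A \<times> Ch B)"
    proof
      fix C assume C: "C \<in> Ch (A \<union> B)"
      then have CAB: "C \<subseteq> A \<union> B" and ch: "chainS C" unfolding Ch_def by auto
      have "C = (\<lambda>(C1, C2). C1 \<union> C2) (C \<inter> A, C \<inter> B)" using CAB by auto
      moreover have "C \<inter> A \<in> Ch A" "C \<inter> B \<in> Ch B"
        using ch unfolding Ch_def chainS_def by blast+
      ultimately show "C \<in> (\<lambda>(C1, C2). C1 \<union> C2) ` (Ch A \<times> Ch B)" by blast
    qed
  next
    show "(\<lambda>(C1, C2). C1 \<union> C2) ` (Ch A \<times> Ch B) \<subseteq> Ch (A \<union> B)"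
    proof clarify
      fix C1 C2 assume "C1 \<in> Ch A" "C2 \<in> Ch B"
      then have h: "C1 \<subseteq> A" "C2 \<subseteq> B" "chainS C1" "chainS C2" unfolding Ch_def by auto
      have "chainS (C1 \<union> C2)" unfolding chainS_def
      proof (intro ballI impI)
        fix a b assume ab: "a \<in> C1 \<union> C2" "b \<in> C1 \<union> C2" "a \<noteq> b"
        show "a \<subset> b \<or> b \<subset> a"
        proof (cases "a \<in> C1")
          case True
          show ?thesis
          proof (cases "b \<in> C1")
            case True
            then show ?thesis using \<open>a \<in> C1\<close> ab(3) h(3) unfolding chainS_def by blast
          next
            case False
            then have "b \<in> C2" using ab by blast
            then show ?thesis using \<open>a \<in> C1\<close> h lt by blast
          qed
        next
          case False
          then have a2: "a \<in> C2" using ab by blast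
          show ?thesis
          proof (cases "b \<in> C1")
            case True
            then show ?thesis using a2 h lt by blast
          next
            case False
            then have "b \<in> C2" using ab by blast
            then show ?thesis using a2 ab(3) h(4) unfolding chainS_def by blast
          qed
        qed
      qed
      then show "C1 \<union> C2 \<in> Ch (A \<union> B)" unfolding Ch_def using h by blast
    qed
  qed
  have inj: "inj_on (\<lambda>(C1, C2). C1 \<union> C2) (Ch A \<times> Ch B)"
  proof (rule inj_onI, clarify)
    fix C1 C2 D1 D2 assume h: "C1 \<in> Ch A" "C2 \<in> Ch B" "D1 \<in> Ch A" "D2 \<in> Ch B" "C1 \<union> C2 = D1 \<union> D2"
    then have "C1 = (C1 \<union> C2) \<inter> A" "D1 = (D1 \<union> D2) \<inter> A" "C2 = (C1 \<union> C2) \<inter> B" "D2 = (D1 \<union> D2) \<inter> B"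
      using disj unfolding Ch_def by auto
    then show "C1 = D1 \<and> C2 = D2" using h(5) by metis
  qed
  have "hsum (A \<union> B) = (\<Sum>C\<in>Ch (A \<union> B). (-1::int)^card C)" unfolding hsum_def Ch_def by simp
  also have "\<dots> = (\<Sum>p\<in>Ch A \<times> Ch B. (-1::int)^card (fst p \<union> snd p))"
    unfolding eq by (subst sum.reindex[OF inj]) (simp add: case_prod_beta)
  also have "\<dots> = (\<Sum>p\<in>Ch A \<times> Ch B. (-1::int)^card (fst p) * (-1)^card (snd p))"
  proof (rule sum.cong)
    fix p assume "p \<in> Ch A \<times> Ch B"
    then have s: "fst p \<subseteq> A" "snd p \<subseteq> B" unfolding Ch_def by auto
    then have "finite (fst p)" "finite (snd p)" "fst p \<inter> snd p = {}"
      using disj rev_finite_subset[OF fA] rev_finite_subset[OF fB] by blast+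
    then show "(-1::int)^card (fst p \<union> snd p) = (-1)^card (fst p) * (-1)^card (snd p)"
      by (simp add: card_Un_disjoint power_add)
  qed simp
  also have "\<dots> = (\<Sum>C1\<in>Ch A. \<Sum>C2\<in>Ch B. (-1::int)^card C1 * (-1)^card C2)"
    by (simp add: sum.cartesian_product case_prod_beta)
  also have "\<dots> = hsum A * hsum B"
    unfolding hsum_def Ch_def by (simp add: sum_product)
  finally show ?thesis .
qed

lemma clique_hsum:
  assumes fS: "finite S"
  shows "chi (clique_complex S G1_adj) = 1 - hsum S"
proof -
  define Ch where "Ch = {C. C \<subseteq> S \<and> chainS C}"
  have fCh: "finite Ch" unfolding Ch_def by (rule finite_subset[of _ "Pow S"]) (use fS in auto)
  have e: "clique_complex S G1_adj = Ch - {{}}"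
    unfolding clique_complex_def Ch_def chainS_def G1_adj_def
    by (auto intro: rev_finite_subset[OF fS])
  have "chi (clique_complex S G1_adj) = (\<Sum>C\<in>Ch - {{}}. - ((-1::int)^card C))"
    unfolding chi_def e
    by (rule sum.cong[OF refl], rule omega_s) (auto simp: Ch_def intro: rev_finite_subset[OF fS])
  also have "\<dots> = - ((\<Sum>C\<in>Ch. (-1::int)^card C) - 1)"
    using fCh by (simp add: sum_negf sum_diff1 Ch_def chainS_def)
  finally show ?thesis unfolding hsum_def Ch_def by simp
qed

lemma sphere_split:
  assumes sc: "simplicial_complex G" and x: "x \<in> G"
  shows "sphere G x = {y. y \<noteq> {} \<and> y \<subset> x} \<union> {y\<in>G. x \<subset> y}"
proof (rule set_eqI)
  fix y
  have "y \<noteq> {} \<Longrightarrow> y \<subset> x \<Longrightarrow> y \<in> G" using sc_props(4)[OF sc x, of y] by auto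
  moreover have "y \<in> G \<Longrightarrow> y \<noteq> {}" using sc_props(3)[OF sc] by blast
  ultimately show "y \<in> sphere G x \<longleftrightarrow> y \<in> {y. y \<noteq> {} \<and> y \<subset> x} \<union> {y\<in>G. x \<subset> y}"
    unfolding sphere_def by blast
qed

lemma star_sphere:
  assumes sc: "simplicial_complex G" and x: "x \<in> G"
  shows "chi (star G x) = 1 - chi (clique_complex (sphere G x) G1_adj)"
proof -
  have fx: "finite x" "x \<noteq> {}" using sc_props(2,3)[OF sc x] by auto
  have fG: "finite G" using sc_props(1)[OF sc] .
  have f1: "finite {y. y \<noteq> {} \<and> y \<subset> x}" by (rule finite_subset[of _ "Pow x"]) (use fx in auto)
  have f2: "finite {y\<in>G. x \<subset> y}" using fG by simp
  have "hsum (sphere G x) = hsum {y. y \<noteq> {} \<and> y \<subset> x} * hsum {y\<in>G. x \<subset> y}"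
    unfolding sphere_split[OF sc x] by (rule hsum_union[OF f1 f2]) auto
  also have "\<dots> = omega x * (omega x * chi (star G x))"
    using hsum_down[OF fx] hsum_up[OF sc x] by simp
  also have "\<dots> = chi (star G x)" using omega_sq[of x] by (simp add: mult.assoc[symmetric])
  finally have "hsum (sphere G x) = chi (star G x)" .
  moreover have "finite (sphere G x)" unfolding sphere_def using fG by simp
  ultimately have "chi (clique_complex (sphere G x) G1_adj) = 1 - chi (star G x)"
    using clique_hsum[of "sphere G x"] by metis
  then show ?thesis by linarith
qed

definition gI :: "'a set set \<Rightarrow> 'a set \<Rightarrow> 'a set \<Rightarrow> int" where
  "gI G x z = omega x * omega z * chi {w\<in>G. x \<union> z \<subseteq> w}"

lemma gI_sym: "gI G x z = gI G z x"
  unfolding gI_def by (simp add: Un_commute mult.commute)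

lemma T_lemma:
  assumes sc: "simplicial_complex G" and w: "w \<in> G"
  shows "(\<Sum>y\<in>{y\<in>G. y \<subseteq> w \<and> x \<inter> y \<noteq> {}}. omega y) = (if w \<subseteq> x then 1 else 0)"
proof -
  have fw: "finite w" "w \<noteq> {}" using sc_props(2,3)[OF sc w] by auto
  have e1: "{y\<in>G. y \<subseteq> w \<and> x \<inter> y \<noteq> {}} = (Pow w - {{}}) - (Pow (w - x) - {{}})"
  proof (rule set_eqI)
    fix y
    have "y \<subseteq> w \<Longrightarrow> y \<noteq> {} \<Longrightarrow> y \<in> G" using sc_props(4)[OF sc w] by blast
    then show "y \<in> {y\<in>G. y \<subseteq> w \<and> x \<inter> y \<noteq> {}} \<longleftrightarrow> y \<in> (Pow w - {{}}) - (Pow (w - x) - {{}})"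
      by auto
  qed
  have sub: "Pow (w - x) - {{}} \<subseteq> Pow w - {{}}" by auto
  have "(\<Sum>y\<in>{y\<in>G. y \<subseteq> w \<and> x \<inter> y \<noteq> {}}. omega y)
      = (\<Sum>y\<in>Pow w - {{}}. omega y) - (\<Sum>y\<in>Pow (w - x) - {{}}. omega y)"
    unfolding e1 using fw by (intro sum_diff) (auto simp: sub)
  also have "\<dots> = 1 - (if w - x = {} then 0 else 1)"
    using nonempty_omega[of w] nonempty_omega[of "w - x"] fw by simp
  finally show ?thesis by auto
qed

lemma Lg:
  assumes sc: "simplicial_complex G" and x: "x \<in> G" and z: "z \<in> G"
  shows "(\<Sum>y\<in>G. (if x \<inter> y \<noteq> {} then gI G y z else 0)) = (if x = z then 1 else 0)"
proof -
  have fG: "finite G" using sc_props(1)[OF sc] .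
  define Y where "Y = {y\<in>G. x \<inter> y \<noteq> {}}"
  have fY: "finite Y" unfolding Y_def using fG by simp
  have "(\<Sum>y\<in>G. (if x \<inter> y \<noteq> {} then gI G y z else 0)) = (\<Sum>y\<in>Y. gI G y z)"
    unfolding Y_def using fG by (simp add: sum.inter_filter)
  also have "\<dots> = (\<Sum>y\<in>Y. \<Sum>w\<in>{w\<in>G. y \<union> z \<subseteq> w}. omega y * omega z * omega w)"
    unfolding gI_def chi_def by (simp add: sum_distrib_left)
  also have "\<dots> = (\<Sum>w\<in>G. \<Sum>y\<in>{y\<in>Y. y \<union> z \<subseteq> w}. omega y * omega z * omega w)"
    using fY fG by (rule sum.swap_restrict)
  also have "\<dots> = (\<Sum>w\<in>G. if z \<subseteq> w \<and> w \<subseteq> x then omega z * omega w else 0)"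
  proof (rule sum.cong[OF refl])
    fix w assume w: "w \<in> G"
    show "(\<Sum>y\<in>{y\<in>Y. y \<union> z \<subseteq> w}. omega y * omega z * omega w) = (if z \<subseteq> w \<and> w \<subseteq> x then omega z * omega w else 0)"
    proof (cases "z \<subseteq> w")
      case True
      have e: "{y\<in>Y. y \<union> z \<subseteq> w} = {y\<in>G. y \<subseteq> w \<and> x \<inter> y \<noteq> {}}" unfolding Y_def using True by auto
      have "(\<Sum>y\<in>{y\<in>Y. y \<union> z \<subseteq> w}. omega y * omega z * omega w)
          = (\<Sum>y\<in>{y\<in>G. y \<subseteq> w \<and> x \<inter> y \<noteq> {}}. omega y) * (omega z * omega w)"
        unfolding e by (simp add: sum_distrib_right mult.assoc)
      also have "\<dots> = (if w \<subseteq> x then 1 else 0) * (omega z * omega w)"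
        using T_lemma[OF sc w, of x] by simp
      finally show ?thesis using True by simp
    next
      case False
      then have e: "{y\<in>Y. y \<union> z \<subseteq> w} = {}" by auto
      show ?thesis unfolding e using False by simp
    qed
  qed
  also have "\<dots> = (\<Sum>w\<in>{w\<in>G. z \<subseteq> w \<and> w \<subseteq> x}. omega z * omega w)"
    using fG by (simp add: sum.inter_filter)
  also have "\<dots> = omega z * (\<Sum>w\<in>{w. z \<subseteq> w \<and> w \<subseteq> x}. omega w)"
  proof -
    have "{w\<in>G. z \<subseteq> w \<and> w \<subseteq> x} = {w. z \<subseteq> w \<and> w \<subseteq> x}"
    proof (rule set_eqI)
      fix w
      have "z \<subseteq> w \<Longrightarrow> w \<subseteq> x \<Longrightarrow> w \<in> G" using sc_props(4)[OF sc x, of w] sc_props(3)[OF sc z] by blast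
      then show "w \<in> {w\<in>G. z \<subseteq> w \<and> w \<subseteq> x} \<longleftrightarrow> w \<in> {w. z \<subseteq> w \<and> w \<subseteq> x}" by auto
    qed
    then show ?thesis by (simp add: sum_distrib_left)
  qed
  also have "\<dots> = (if x = z then 1 else 0)"
  proof (cases "z \<subseteq> x")
    case True
    then show ?thesis using interval_omega[OF sc_props(2)[OF sc x] True sc_props(3)[OF sc z]] omega_sq[of z]
      by auto
  next
    case False
    then have e0: "{w. z \<subseteq> w \<and> w \<subseteq> x} = {}" by auto
    show ?thesis unfolding e0 using False by auto
  qed
  finally show ?thesis .
qed

lemma inverse_exists:
  assumes sc: "simplicial_complex G"
  shows "inverse_on G conn_matrix (\<lambda>x z. real_of_int (gI G x z))"
proof -
  have L: "(\<Sum>y\<in>G. conn_matrix x y * real_of_int (gI G y z)) = (if x = z then 1 else 0)"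
    if x: "x \<in> G" and z: "z \<in> G" for x z
  proof -
    have "(\<Sum>y\<in>G. conn_matrix x y * real_of_int (gI G y z))
        = (\<Sum>y\<in>G. real_of_int (if x \<inter> y \<noteq> {} then gI G y z else 0))"
      by (rule sum.cong) (auto simp: conn_matrix_def)
    also have "\<dots> = real_of_int (\<Sum>y\<in>G. (if x \<inter> y \<noteq> {} then gI G y z else 0))"
      by (simp only: of_int_sum)
    also have "\<dots> = (if x = z then 1 else 0)" using Lg[OF sc x z] by simp
    finally show ?thesis .
  qed
  show ?thesis unfolding inverse_on_def
  proof (intro conjI ballI)
    fix x z assume "x \<in> G" "z \<in> G"
    then show "(\<Sum>y\<in>G. conn_matrix x y * real_of_int (gI G y z)) = (if x = z then 1 else 0)" by (rule L)
  next
    fix x z assume xz: "x \<in> G" "z \<in> G"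
    have "(\<Sum>y\<in>G. real_of_int (gI G x y) * conn_matrix y z) = (\<Sum>y\<in>G. conn_matrix z y * real_of_int (gI G y x))"
      by (rule sum.cong) (auto simp: conn_matrix_def gI_sym Int_commute)
    also have "\<dots> = (if z = x then 1 else 0)" using L[OF xz(2) xz(1)] .
    finally show "(\<Sum>y\<in>G. real_of_int (gI G x y) * conn_matrix y z) = (if x = z then 1 else 0)" by auto
  qed
qed

lemma inverse_unique_diag:
  assumes fG: "finite G" and g: "inverse_on G L g" and h: "inverse_on G L h" and x: "x \<in> G"
  shows "g x x = h x x"
proof -
  have "g x x = (\<Sum>y\<in>G. g x y * (if y = x then 1 else 0))"
    using fG x by (simp add: if_distrib cong: if_cong)
  also have "\<dots> = (\<Sum>y\<in>G. g x y * (\<Sum>w\<in>G. L y w * h w x))"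
    using h x unfolding inverse_on_def by (intro sum.cong) auto
  also have "\<dots> = (\<Sum>y\<in>G. \<Sum>w\<in>G. g x y * L y w * h w x)"
    by (simp add: sum_distrib_left mult.assoc)
  also have "\<dots> = (\<Sum>w\<in>G. \<Sum>y\<in>G. g x y * L y w * h w x)"
    by (rule sum.swap)
  also have "\<dots> = (\<Sum>w\<in>G. (\<Sum>y\<in>G. g x y * L y w) * h w x)"
    by (simp add: sum_distrib_right)
  also have "\<dots> = (\<Sum>w\<in>G. (if x = w then 1 else 0) * h w x)"
    using g x unfolding inverse_on_def by (intro sum.cong) auto
  also have "\<dots> = (\<Sum>w\<in>G. if x = w then h w x else 0)" by (rule sum.cong) auto
  also have "\<dots> = h x x" using fG x by simp
  finally show ?thesis .
qed

theorem mainTheorem10: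
  fixes G :: "'a set set"
  assumes "simplicial_complex G"
  shows "(\<exists>g. inverse_on G conn_matrix g) \<and>
         (\<forall>g. inverse_on G conn_matrix g \<longrightarrow>
            (\<forall>x\<in>G. g x x = real_of_int (chi (star G x)) \<and>
                    real_of_int (chi (star G x)) = 1 - real_of_int (chi (clique_complex (sphere G x) G1_adj))))"
proof (intro conjI allI impI ballI)
  show "\<exists>g. inverse_on G conn_matrix g" using inverse_exists[OF assms] by blast
next
  fix g x assume g: "inverse_on G conn_matrix g" and x: "x \<in> G"
  have "g x x = real_of_int (gI G x x)"
    using inverse_unique_diag[OF sc_props(1)[OF assms] g inverse_exists[OF assms] x] .
  also have "gI G x x = chi (star G x)"
    unfolding gI_def star_def using omega_sq[of x] by simp
  finally show "g x x = real_of_int (chi (star G x))" .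
next
  fix g x assume x: "x \<in> G"
  show "real_of_int (chi (star G x)) = 1 - real_of_int (chi (clique_complex (sphere G x) G1_adj))"
    using star_sphere[OF assms x] by simp
qed

end
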